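(* Let $X$ be a Tychonoff space. If player II has a winning strategy in the game $\mathsf{G}_1(\Omega, \Omega)$ played on $X$, then $X_\delta$ is Lindelöf.
   Context: $\Omega$ is the collection of all open $\omega$-covers of $X$, i.e., open covers $\mathcal{C}$ such that every finite $F \subset X$ is contained in some member of $\mathcal{C}$ (here taken, as usual, with $X \notin \mathcal{C}$ not required). The game $\mathsf{G}_1(\Omega,\Omega)$ is played in innings $n \in \omega$: player I chooses $\mathcal{C}_n \in \Omega$, then player II chooses $C_n \in \mathcal{C}_n$; II wins iff $\{C_n : n \in \omega\} \in \Omega$. $X_\delta$, the $G_\delta$ modification of $X$, is the set $X$ with the topology generated by the $G_\delta$ subsets of $X$. *)

theory Defs
  imports "HOL-Analysis.Analysis"
begin

definition Tychonoff_space :: "'a topology \<Rightarrow> bool" where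
  "Tychonoff_space X \<equiv> completely_regular_space X \<and> Hausdorff_space X"

text \<open>Open omega-covers of X (X itself may be a member).\<close>
definition omega_cover :: "'a topology \<Rightarrow> 'a set set \<Rightarrow> bool" where
  "omega_cover X \<C> \<equiv> (\<forall>U\<in>\<C>. openin X U) \<and> \<Union>\<C> = topspace X \<and>
     (\<forall>F. finite F \<and> F \<subseteq> topspace X \<longrightarrow> (\<exists>U\<in>\<C>. F \<subseteq> U))"

text \<open>A strategy for player II in G_1(Omega,Omega): given the list of moves
  [C_0,...,C_n] of player I so far, it picks a member of the last move C_n.
  (Player II's own earlier moves are determined by the strategy, so this is
  the general perfect-information strategy.)\<close>
definition G1_Omega_strategy_II :: "'a topology \<Rightarrow> ('a set set list \<Rightarrow> 'a set) \<Rightarrow> bool" where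
  "G1_Omega_strategy_II X \<sigma> \<equiv>
     \<forall>hs. hs \<noteq> [] \<and> (\<forall>\<C>\<in>set hs. omega_cover X \<C>) \<longrightarrow> \<sigma> hs \<in> last hs"

definition G1_Omega_winning_II :: "'a topology \<Rightarrow> ('a set set list \<Rightarrow> 'a set) \<Rightarrow> bool" where
  "G1_Omega_winning_II X \<sigma> \<equiv> G1_Omega_strategy_II X \<sigma> \<and>
     (\<forall>\<C> :: nat \<Rightarrow> 'a set set. (\<forall>n. omega_cover X (\<C> n)) \<longrightarrow>
        omega_cover X (range (\<lambda>n. \<sigma> (map \<C> [0..<Suc n]))))"

definition II_wins_G1_Omega :: "'a topology \<Rightarrow> bool" where
  "II_wins_G1_Omega X \<equiv> (\<exists>\<sigma>. G1_Omega_winning_II X \<sigma>)"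

definition G_delta_modification :: "'a topology \<Rightarrow> 'a topology" where
  "G_delta_modification X \<equiv> topology_generated_by {S. gdelta_in X S}"

end

theory Submission
  imports Defs
begin

primrec nd :: "('b list \<Rightarrow> nat \<Rightarrow> 'b) \<Rightarrow> nat list \<Rightarrow> 'b list" where
  "nd Cs [] = []"
| "nd Cs (k#ks) = nd Cs ks @ [Cs (nd Cs ks) k]"

lemma gen_basis:
  assumes "generate_topology_on S T0" and "\<And>A B. A \<in> S \<Longrightarrow> B \<in> S \<Longrightarrow> A \<inter> B \<in> S"
  shows "\<forall>x\<in>T0. \<exists>A\<in>S. x \<in> A \<and> A \<subseteq> T0"
  using assms(1)
proof induction
  case Empty then show ?case by simp
next
  case (Int a b)
  show ?case
  proof
    fix x assume "x \<in> a \<inter> b"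
    then obtain A B where "A \<in> S" "x \<in> A" "A \<subseteq> a" "B \<in> S" "x \<in> B" "B \<subseteq> b"
      using Int.IH by (meson IntD1 IntD2)
    then show "\<exists>A\<in>S. x \<in> A \<and> A \<subseteq> a \<inter> b"
      using assms(2)[of A B] by blast
  qed
next
  case (UN K)
  show ?case
  proof
    fix x assume "x \<in> \<Union>K"
    then obtain k where k: "k \<in> K" "x \<in> k" by blast
    have "\<forall>x\<in>k. \<exists>A\<in>S. x \<in> A \<and> A \<subseteq> k" using UN k(1) by simp
    then obtain A where "A \<in> S" "x \<in> A" "A \<subseteq> k" using k(2) by blast
    then show "\<exists>A\<in>S. x \<in> A \<and> A \<subseteq> \<Union>K" using k(1) by blast
  qed
next
  case (Basis s) then show ?case by blast
qed

lemma F_exists: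
  assumes win: "G1_Omega_winning_II X \<sigma>" and valid: "\<forall>c\<in>set s. omega_cover X c"
  shows "\<exists>F. finite F \<and> F \<subseteq> topspace X \<and>
     (\<forall>U. openin X U \<and> F \<subseteq> U \<longrightarrow> (\<exists>C. omega_cover X C \<and> \<sigma> (s@[C]) = U))"
proof (rule ccontr)
  assume H: "\<not> ?thesis"
  have ex: "\<exists>U. openin X U \<and> F \<subseteq> U \<and> (\<forall>C. omega_cover X C \<longrightarrow> \<sigma> (s@[C]) \<noteq> U)"
    if F: "finite F" "F \<subseteq> topspace X" for F
  proof -
    have "\<not> (\<forall>U. openin X U \<and> F \<subseteq> U \<longrightarrow> (\<exists>C. omega_cover X C \<and> \<sigma> (s@[C]) = U))"
      using H F by blast
    then obtain U where "openin X U" "F \<subseteq> U" "\<not> (\<exists>C. omega_cover X C \<and> \<sigma> (s@[C]) = U)"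
      by blast
    then show ?thesis by blast
  qed
  define Uf where "Uf F = (SOME U. openin X U \<and> F \<subseteq> U \<and> (\<forall>C. omega_cover X C \<longrightarrow> \<sigma> (s@[C]) \<noteq> U))" for F
  have Uf0: "openin X (Uf F) \<and> F \<subseteq> Uf F \<and> (\<forall>C. omega_cover X C \<longrightarrow> \<sigma> (s@[C]) \<noteq> Uf F)"
    if "finite F" "F \<subseteq> topspace X" for F
    unfolding Uf_def using ex[OF that] by (rule someI_ex)
  have Uf: "openin X (Uf F)" "F \<subseteq> Uf F" "\<And>C. omega_cover X C \<Longrightarrow> \<sigma> (s@[C]) \<noteq> Uf F"
    if "finite F" "F \<subseteq> topspace X" for F
    using Uf0[OF that] by blast+
  define \<C> where "\<C> = Uf ` {F. finite F \<and> F \<subseteq> topspace X}"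
  have om: "omega_cover X \<C>"
    unfolding omega_cover_def
  proof (intro conjI)
    show "\<forall>U\<in>\<C>. openin X U" unfolding \<C>_def using Uf(1) by blast
    show "\<Union> \<C> = topspace X"
    proof
      show "\<Union> \<C> \<subseteq> topspace X" unfolding \<C>_def using Uf(1) openin_subset by blast
      show "topspace X \<subseteq> \<Union> \<C>"
      proof
        fix x assume x: "x \<in> topspace X"
        then have "x \<in> Uf {x}" using Uf(2)[of "{x}"] by simp
        moreover have "Uf {x} \<in> \<C>" unfolding \<C>_def using x by blast
        ultimately show "x \<in> \<Union> \<C>" by blast
      qed
    qed
    show "\<forall>F. finite F \<and> F \<subseteq> topspace X \<longrightarrow> (\<exists>U\<in>\<C>. F \<subseteq> U)"
      unfolding \<C>_def using Uf(2) by blast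
  qed
  have strat: "\<forall>hs. hs \<noteq> [] \<and> (\<forall>\<C>\<in>set hs. omega_cover X \<C>) \<longrightarrow> \<sigma> hs \<in> last hs"
    using win unfolding G1_Omega_winning_II_def G1_Omega_strategy_II_def by blast
  have v2: "\<forall>c\<in>set (s@[\<C>]). omega_cover X c" using om valid by simp
  have "\<sigma> (s@[\<C>]) \<in> last (s@[\<C>])"
    using strat v2 by blast
  then have "\<sigma> (s@[\<C>]) \<in> \<C>" by simp
  then obtain F where F: "finite F" "F \<subseteq> topspace X" "\<sigma> (s@[\<C>]) = Uf F"
    unfolding \<C>_def by blast
  show False using Uf(3)[OF F(1,2) om] F(3) by blast
qed

lemma key:
  assumes win: "G1_Omega_winning_II X \<sigma>"
    and W: "\<forall>W\<in>\<W>. gdelta_in X W" and cov: "topspace X \<subseteq> \<Union>\<W>"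
  shows "\<exists>\<V>. countable \<V> \<and> \<V> \<subseteq> \<W> \<and> topspace X \<subseteq> \<Union>\<V>"
proof -
  define G where "G W = (SOME C. (\<forall>n. openin X (C n)) \<and> (\<forall>n. C(Suc n) \<subseteq> C n) \<and> \<Inter>(range C) = W)" for W
  have G: "(\<forall>n. openin X (G W n)) \<and> (\<forall>n. G W (Suc n) \<subseteq> G W n) \<and> \<Inter>(range (G W)) = W"
    if "W \<in> \<W>" for W
  proof -
    have "gdelta_in X W" using W that by blast
    then have "\<exists>C. (\<forall>n. openin X (C n)) \<and> (\<forall>n. C(Suc n) \<subseteq> C n) \<and> \<Inter>(range C) = W"
      by (simp only: gdelta_in_descending)
    then show ?thesis unfolding G_def by (rule someI_ex)
  qed
  have Gmono: "G W m \<subseteq> G W n" if "W \<in> \<W>" "n \<le> m" for W m n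
  proof -
    have h: "\<And>n. G W (Suc n) \<subseteq> G W n" using G[OF that(1)] by blast
    show ?thesis by (rule lift_Suc_antimono_le[of "G W", OF h that(2)])
  qed
  define Wp where "Wp p = (SOME W. W \<in> \<W> \<and> p \<in> W)" for p
  have Wp: "Wp p \<in> \<W> \<and> p \<in> Wp p" if "p \<in> topspace X" for p
  proof -
    have "\<exists>W. W \<in> \<W> \<and> p \<in> W" using cov that by blast
    then show ?thesis unfolding Wp_def by (rule someI_ex)
  qed
  define P where "P s F \<longleftrightarrow> finite F \<and> F \<subseteq> topspace X \<and>
     (\<forall>U. openin X U \<and> F \<subseteq> U \<longrightarrow> (\<exists>C. omega_cover X C \<and> \<sigma> (s@[C]) = U))" for s F
  define Fs where "Fs s = (SOME F. P s F)" for s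
  have Fs: "P s (Fs s)" if "\<forall>c\<in>set s. omega_cover X c" for s
    unfolding Fs_def P_def using F_exists[OF win that] by (rule someI_ex)
  define Us where "Us s k = (\<Union>p\<in>Fs s. G (Wp p) k)" for s k
  define Cs where "Cs s k = (SOME C. omega_cover X C \<and> \<sigma> (s@[C]) = Us s k)" for s k
  have Cs: "omega_cover X (Cs s k) \<and> \<sigma> (s@[Cs s k]) = Us s k"
    if v: "\<forall>c\<in>set s. omega_cover X c" for s k
  proof -
    have P: "P s (Fs s)" using Fs[OF v] .
    have op: "openin X (G (Wp p) k)" if "p \<in> Fs s" for p
    proof -
      have "p \<in> topspace X" using P that unfolding P_def by blast
      then have "Wp p \<in> \<W>" using Wp by blast
      then show ?thesis using G by blast
    qed
    have "openin X (Us s k)"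
      unfolding Us_def by (rule openin_Union) (use op in blast)
    moreover have "Fs s \<subseteq> Us s k"
    proof
      fix p assume "p \<in> Fs s"
      then have p: "p \<in> topspace X" using P unfolding P_def by auto
      then have "p \<in> G (Wp p) k" using Wp[OF p] G[of "Wp p"] by blast
      then show "p \<in> Us s k" using \<open>p \<in> Fs s\<close> unfolding Us_def by blast
    qed
    ultimately have "\<exists>C. omega_cover X C \<and> \<sigma> (s@[C]) = Us s k"
      using P unfolding P_def by blast
    then show ?thesis unfolding Cs_def by (rule someI_ex)
  qed
  have valid: "\<forall>c\<in>set (nd Cs ks). omega_cover X c" for ks
    by (induction ks) (auto simp: Cs)
  define \<V> where "\<V> = (\<Union>ks. Wp ` Fs (nd Cs ks))"
  have fin: "finite (Fs (nd Cs ks))" and sub: "Fs (nd Cs ks) \<subseteq> topspace X" for ks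
    using Fs[OF valid[of ks]] unfolding P_def by auto
  have "countable \<V>" unfolding \<V>_def
    by (intro countable_UN) (auto simp: fin countable_finite)
  moreover have "\<V> \<subseteq> \<W>" unfolding \<V>_def using sub Wp by blast
  moreover have "topspace X \<subseteq> \<Union>\<V>"
  proof (rule ccontr)
    assume "\<not> topspace X \<subseteq> \<Union>\<V>"
    then obtain x where x: "x \<in> topspace X" "x \<notin> \<Union>\<V>" by blast
    have ex: "\<exists>k. x \<notin> Us (nd Cs ks) k" for ks
    proof -
      let ?F = "Fs (nd Cs ks)"
      have "\<forall>p\<in>?F. \<exists>k. x \<notin> G (Wp p) k"
      proof
        fix p assume p: "p \<in> ?F"
        then have "Wp p \<in> \<V>" unfolding \<V>_def by blast
        then have "x \<notin> Wp p" using x by blast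
        then show "\<exists>k. x \<notin> G (Wp p) k" using G[of "Wp p"] Wp[of p] sub[of ks] p by blast
      qed
      then obtain kp where kp: "\<And>p. p \<in> ?F \<Longrightarrow> x \<notin> G (Wp p) (kp p)" by metis
      have "x \<notin> Us (nd Cs ks) (\<Sum>p\<in>?F. kp p)"
      proof
        assume "x \<in> Us (nd Cs ks) (\<Sum>p\<in>?F. kp p)"
        then obtain p where p: "p \<in> ?F" "x \<in> G (Wp p) (\<Sum>p\<in>?F. kp p)" unfolding Us_def by blast
        have "kp p \<le> (\<Sum>p\<in>?F. kp p)" by (rule member_le_sum[OF p(1) _ fin]) simp
        then have "G (Wp p) (\<Sum>p\<in>?F. kp p) \<subseteq> G (Wp p) (kp p)"
          using Gmono Wp sub p(1) by blast
        then show False using kp p by blast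
      qed
      then show ?thesis by blast
    qed
    define knext where "knext ks = (SOME k. x \<notin> Us (nd Cs ks) k)" for ks
    have kn: "x \<notin> Us (nd Cs ks) (knext ks)" for ks
      unfolding knext_def using ex by (rule someI_ex)
    define sq where "sq = rec_nat [] (\<lambda>n l. knext l # l)"
    have sq0: "sq 0 = []" and sqS: "sq (Suc n) = knext (sq n) # sq n" for n
      unfolding sq_def by simp_all
    define \<C> where "\<C> n = Cs (nd Cs (sq n)) (knext (sq n))" for n
    have ndsq: "nd Cs (sq n) = map \<C> [0..<n]" for n
      by (induction n) (auto simp: sq0 sqS \<C>_def)
    have "\<forall>n. omega_cover X (\<C> n)" unfolding \<C>_def using Cs valid by blast
    then have om: "omega_cover X (range (\<lambda>n. \<sigma> (map \<C> [0..<Suc n])))"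
      using win unfolding G1_Omega_winning_II_def by blast
    have "\<sigma> (map \<C> [0..<Suc n]) = Us (nd Cs (sq n)) (knext (sq n))" for n
    proof -
      have "map \<C> [0..<Suc n] = nd Cs (sq n) @ [\<C> n]" using ndsq by simp
      then show ?thesis unfolding \<C>_def using Cs valid by simp
    qed
    then have "x \<notin> \<Union>(range (\<lambda>n. \<sigma> (map \<C> [0..<Suc n])))" using kn by simp
    then show False using om x(1) unfolding omega_cover_def by blast
  qed
  ultimately show ?thesis by blast
qed

theorem proposition3p5:
  fixes X :: "'a topology"
  assumes "Tychonoff_space X"
    and "II_wins_G1_Omega X"
  shows "Lindelof_space (G_delta_modification X)"
proof -
  obtain \<sigma> where win: "G1_Omega_winning_II X \<sigma>" using assms(2) unfolding II_wins_G1_Omega_def by blast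
  let ?S = "{S. gdelta_in X S}"
  have top: "topspace (G_delta_modification X) = topspace X"
    unfolding G_delta_modification_def using gdelta_in_subset by fastforce
  show ?thesis
    unfolding Lindelof_space_def
  proof (intro allI impI)
    fix \<U> assume A: "(\<forall>U\<in>\<U>. openin (G_delta_modification X) U) \<and> \<Union>\<U> = topspace (G_delta_modification X)"
    define \<W> where "\<W> = {S. gdelta_in X S \<and> (\<exists>U\<in>\<U>. S \<subseteq> U)}"
    have "topspace X \<subseteq> \<Union>\<W>"
    proof
      fix x assume "x \<in> topspace X"
      then obtain U where U: "U \<in> \<U>" "x \<in> U" using A top by blast
      then have "generate_topology_on ?S U"
        using A unfolding G_delta_modification_def by (simp add: openin_topology_generated_by_iff)
      then have "\<forall>x\<in>U. \<exists>A\<in>?S. x \<in> A \<and> A \<subseteq> U"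
        by (rule gen_basis) (auto intro: gdelta_in_Int)
      then show "x \<in> \<Union>\<W>" using U unfolding \<W>_def by blast
    qed
    then obtain \<V> where V: "countable \<V>" "\<V> \<subseteq> \<W>" "topspace X \<subseteq> \<Union>\<V>"
      using key[OF win, of \<W>] unfolding \<W>_def by blast
    have "\<forall>V\<in>\<V>. \<exists>U\<in>\<U>. V \<subseteq> U" using V(2) unfolding \<W>_def by blast
    then obtain f where f: "\<And>V. V \<in> \<V> \<Longrightarrow> f V \<in> \<U> \<and> V \<subseteq> f V" by metis
    have "countable (f ` \<V>)" using V(1) by simp
    moreover have "f ` \<V> \<subseteq> \<U>" using f by blast
    moreover have "\<Union>(f ` \<V>) = topspace (G_delta_modification X)"
    proof
      show "\<Union>(f ` \<V>) \<subseteq> topspace (G_delta_modification X)" using f A by blast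
      show "topspace (G_delta_modification X) \<subseteq> \<Union>(f ` \<V>)" using V(3) f top by blast
    qed
    ultimately show "\<exists>\<V>. countable \<V> \<and> \<V> \<subseteq> \<U> \<and> \<Union>\<V> = topspace (G_delta_modification X)"
      by blast
  qed
qed

end
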